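(* For any odd prime $p$, the Laurent series $\Theta_p(t)\in\mathbb{F}_p(\!(t^{-1})\!)$ is a quadratic irrational.
   Context: The $p$-Cantor sequence: for an odd prime $p$, $p_2=\frac{p-1}{2}$, identify $\{0,\dots,p-1\}$ with $\mathbb{F}_p$ and let $\phi_p(n)$ be the word of length $p$ whose $i$-th letter ($0\le i\le p-1$) is $n\binom{p_2}{i/2}\bmod p$ for even $i$ and $0$ for odd $i$; $\phi_p$ acts on words by concatenation. $(c^{(p)}_i)_{i\ge0}=\lim_n\phi_p^n(1)$ and $\Theta_p(t)=t^{-1}\sum_{i\ge0}c^{(p)}_it^{-i}$. A quadratic irrational is a Laurent series not in $\mathbb{F}_p(t)$ that satisfies a quadratic equation with coefficients in $\mathbb{F}_p[t]$. *)

theory Defs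
  imports "HOL-Computational_Algebra.Computational_Algebra" "HOL-Library.Cardinality"
begin

text \<open>The field F_p is modelled by a finite field type 'a with CARD('a) = p.
  The variable X of formal Laurent series stands for t^{-1}, so 'a fls is
  F_p((t^{-1})), and t corresponds to fls_X_inv.\<close>

definition phalf :: "nat \<Rightarrow> nat" where
  "phalf p = (p - 1) div 2"

definition cantor_letter :: "nat \<Rightarrow> 'a::field \<Rightarrow> 'a list" where
  "cantor_letter p n =
     map (\<lambda>i. if even i then n * of_nat (phalf p choose (i div 2)) else 0) [0..<p]"

definition cantor_morph :: "nat \<Rightarrow> 'a::field list \<Rightarrow> 'a list" where
  "cantor_morph p w = concat (map (cantor_letter p) w)"

text \<open>The limit word lim_n phi_p^n(1): its i-th letter is read off phi_p^(i+1)(1),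
  which has length p^(i+1) > i.\<close>
definition cantor_seq :: "nat \<Rightarrow> nat \<Rightarrow> 'a::field" where
  "cantor_seq p i = ((cantor_morph p ^^ Suc i) [1]) ! i"

definition Theta :: "nat \<Rightarrow> 'a::field fls" where
  "Theta p = fls_X * fps_to_fls (Abs_fps (cantor_seq p))"

definition poly_t :: "'a::field poly \<Rightarrow> 'a fls" where
  "poly_t P = poly (map_poly fls_const P) fls_X_inv"

definition quadratic_irrational :: "'a::field fls \<Rightarrow> bool" where
  "quadratic_irrational f \<longleftrightarrow>
     (\<not> (\<exists>P Q. Q \<noteq> 0 \<and> f * poly_t Q = poly_t P)) \<and>
     (\<exists>A B C. A \<noteq> 0 \<and> poly_t A * f ^ 2 + poly_t B * f + poly_t C = 0)"

end

theory Submission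
  imports Defs "HOL-Number_Theory.Residues"
begin

definition coefE :: "nat \<Rightarrow> nat \<Rightarrow> 'a::field" where
  "coefE p i = (if even i then of_nat (phalf p choose (i div 2)) else 0)"

lemma letter_len [simp]: "length (cantor_letter p n) = p"
  by (simp add: cantor_letter_def)

lemma letter_nth: "r < p \<Longrightarrow> cantor_letter p n ! r = n * coefE p r"
  by (simp add: cantor_letter_def coefE_def)

lemma morph_len [simp]: "length (cantor_morph p w) = p * length w"
  by (induction w) (auto simp: cantor_morph_def)

lemma morph_nth: "k < length w \<Longrightarrow> r < p \<Longrightarrow>
   cantor_morph p w ! (p * k + r) = cantor_letter p (w ! k) ! r"
proof (induction w arbitrary: k)
  case Nil then show ?case by simp
next
  case (Cons x w)
  show ?case
  proof (cases k)
    case 0 then show ?thesis using Cons by (simp add: cantor_morph_def nth_append)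
  next
    case (Suc k')
    have "p * k + r = p + (p * k' + r)" using Suc by simp
    then show ?thesis using Cons Suc
      by (simp add: cantor_morph_def nth_append del: add_Suc_right)
  qed
qed

function cd :: "nat \<Rightarrow> nat \<Rightarrow> 'a::field" where
  "cd p m = (if m = 0 \<or> p \<le> 1 then 1 else cd p (m div p) * coefE p (m mod p))"
  by auto
termination by (relation "measure snd") auto

declare cd.simps [simp del]

lemma coefE_0 [simp]: "coefE p 0 = 1"
  by (simp add: coefE_def)

lemma cd_rec: "p > 1 \<Longrightarrow> cd p m = cd p (m div p) * coefE p (m mod p)"
  by (cases "m = 0") (subst cd.simps; simp)+

lemma iter_len: "length ((cantor_morph p ^^ n) [1::'a::field]) = p ^ n"
  by (induction n) auto

lemma iter_nth: "p > 1 \<Longrightarrow> i < p ^ n \<Longrightarrow> ((cantor_morph p ^^ n) [1::'a::field]) ! i = cd p i"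
proof (induction n arbitrary: i)
  case 0 then show ?case by (simp add: cd.simps)
next
  case (Suc n)
  define k where "k = i div p"
  define r where "r = i mod p"
  have i: "i = p * k + r" by (simp add: k_def r_def)
  have r: "r < p" using Suc by (simp add: r_def)
  have k: "k < p ^ n" using Suc(3) by (simp add: k_def less_mult_imp_div_less mult.commute)
  have "((cantor_morph p ^^ Suc n) [1::'a]) ! i = cantor_morph p ((cantor_morph p ^^ n) [1]) ! (p * k + r)"
    using i by simp
  also have "\<dots> = cd p k * coefE p r"
  proof -
    have "k < length ((cantor_morph p ^^ n) [1::'a])" using k by (simp add: iter_len)
    then show ?thesis using morph_nth[of k "(cantor_morph p ^^ n) [1::'a]" r p] k r Suc
      by (simp add: letter_nth)
  qed
  also have "\<dots> = cd p i" by (subst cd_rec[OF Suc(2), of i]) (simp add: k_def r_def)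
  finally show ?case .
qed

lemma cantor_seq_cd: "p > 1 \<Longrightarrow> cantor_seq p i = (cd p i :: 'a::field)"
  unfolding cantor_seq_def
proof (rule iter_nth)
  assume "p > 1"
  have "i < 2 ^ i" by (rule less_exp)
  also have "\<dots> \<le> p ^ i" using \<open>p > 1\<close> by (simp add: power_mono)
  also have "\<dots> \<le> p ^ Suc i" using \<open>p > 1\<close> by simp
  finally show "i < p ^ Suc i" .
qed

definition fsub :: "nat \<Rightarrow> 'a::field fps \<Rightarrow> 'a fps" where
  "fsub p A = A oo fps_X ^ p"

lemma fsub_nth:
  assumes "p > 0"
  shows "fsub p A $ n = (if p dvd n then A $ (n div p) else 0)"
proof -
  have "fsub p A $ n = (\<Sum>i=0..n. A $ i * ((fps_X ^ p) ^ i) $ n)"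
    by (simp add: fsub_def fps_compose_nth)
  also have "\<dots> = (\<Sum>i=0..n. if i = n div p \<and> p dvd n then A $ (n div p) else 0)"
  proof (rule sum.cong)
    fix i assume "i \<in> {0..n}"
    have "(n = p * i) \<longleftrightarrow> (i = n div p \<and> p dvd n)" using assms by auto
    then show "A $ i * ((fps_X ^ p) ^ i) $ n = (if i = n div p \<and> p dvd n then A $ (n div p) else 0)"
      by (auto simp: power_mult[symmetric])
  qed simp
  also have "\<dots> = (if p dvd n then A $ (n div p) else 0)"
    by (cases "p dvd n") (simp_all add: sum.delta')
  finally show ?thesis .
qed

lemma fsub_mult: "p > 0 \<Longrightarrow> fsub p (A * B) = fsub p A * fsub p B"
  unfolding fsub_def by (rule fps_compose_mult_distrib) simp

lemma fsub_power: "p > 0 \<Longrightarrow> fsub p (A ^ k) = fsub p A ^ k"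
  unfolding fsub_def by (rule fps_compose_power[symmetric]) simp

lemma binom_fps: "(1 + fps_X ^ 2 :: 'a::field fps) ^ m =
   (\<Sum>k\<le>m. fps_const (of_nat (m choose k)) * fps_X ^ (2 * k))"
proof -
  have h: "\<And>k. (fps_X ^ 2) ^ k = (fps_X :: 'a fps) ^ (2 * k)" by (simp add: power_mult)
  show ?thesis using binomial_ring[of "fps_X ^ 2 :: 'a fps" 1 m]
    by (simp add: add.commute fps_of_nat h)
qed

lemma E_eq: "Abs_fps (coefE p) = (1 + fps_X ^ 2 :: 'a::field fps) ^ phalf p"
proof (rule fps_ext)
  fix n
  have "((1 + fps_X ^ 2 :: 'a fps) ^ phalf p) $ n =
     (\<Sum>k\<le>phalf p. if k = n div 2 \<and> even n then of_nat (phalf p choose (n div 2)) else 0)"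
    unfolding binom_fps fps_sum_nth
    by (rule sum.cong) auto
  also have "\<dots> = coefE p n"
    by (cases "even n") (auto simp: sum.delta' coefE_def binomial_eq_0)
  finally show "Abs_fps (coefE p) $ n = ((1 + fps_X ^ 2 :: 'a fps) ^ phalf p) $ n" by simp
qed

lemma coefE_big: "odd p \<Longrightarrow> i \<ge> p \<Longrightarrow> coefE p i = 0"
proof -
  assume "odd p" "i \<ge> p"
  then have "(p - 1) div 2 < i div 2" if "even i" using that by (auto elim!: oddE evenE)
  then show ?thesis by (auto simp: coefE_def phalf_def binomial_eq_0)
qed

lemma D_eq:
  assumes "p > 1" "odd p"
  shows "Abs_fps (cd p) = Abs_fps (coefE p) * fsub p (Abs_fps (cd p) :: 'a::field fps)"
proof (rule fps_ext)
  fix n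
  have "(Abs_fps (coefE p) * fsub p (Abs_fps (cd p) :: 'a fps)) $ n =
     (\<Sum>i=0..n. coefE p i * (if p dvd (n - i) then cd p ((n - i) div p) else 0))"
      proof -
    have "\<And>i. (fsub p (Abs_fps (cd p)) :: 'a fps) $ i = (if p dvd i then cd p (i div p) else 0)"
      using assms by (simp add: fsub_nth)
    then show ?thesis by (simp add: fps_mult_nth)
  qed
  also have "\<dots> = (\<Sum>i=0..n. if i = n mod p then coefE p (n mod p) * cd p (n div p) else 0)"
  proof (rule sum.cong)
    fix i assume i: "i \<in> {0..n}"
    show "coefE p i * (if p dvd (n - i) then cd p ((n - i) div p) else 0) =
      (if i = n mod p then coefE p (n mod p) * cd p (n div p) else (0::'a))"
    proof (cases "i = n mod p")
      case True
      then have "n - i = p * (n div p)" by (simp add: minus_mod_eq_mult_div)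
      then show ?thesis using True assms by simp
    next
      case False
      show ?thesis
      proof (cases "i < p")
        case True
        have "\<not> p dvd (n - i)"
        proof
          assume "p dvd (n - i)"
          then have "(n - i) mod p = 0" by simp
          have "n mod p = ((n - i) + i) mod p" using i by simp
          also have "\<dots> = ((n - i) mod p + i) mod p" by (simp add: mod_add_left_eq)
          also have "\<dots> = i mod p" using \<open>(n - i) mod p = 0\<close> by simp
          finally have "n mod p = i mod p" .
          then show False using False True by simp
        qed
        then show ?thesis using False by simp
      next
        case False
        then have "coefE p i = (0::'a)" by (intro coefE_big[OF assms(2)]) simp
        then show ?thesis using \<open>i \<noteq> n mod p\<close> by simp
      qed
    qed
  qed simp
  also have "\<dots> = coefE p (n mod p) * cd p (n div p)"
    by (simp add: sum.delta')
  also have "\<dots> = cd p n" by (subst cd_rec[OF assms(1), of n]) (simp add: mult.commute)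
  finally show "Abs_fps (cd p) $ n = (Abs_fps (coefE p) * fsub p (Abs_fps (cd p) :: 'a fps)) $ n"
    by simp
qed

lemma CHAR_card:
  assumes "prime p" "CARD('a::{field,finite}) = p"
  shows "CHAR('a) = p"
proof -
  have "CHAR('a) dvd p" using CHAR_dvd_CARD[where 'a='a] assms(2) by simp
  moreover have "\<forall>m. m dvd p \<longrightarrow> m = Suc 0 \<or> m = p" using assms(1) by (simp add: prime_nat_iff)
  ultimately show ?thesis using CHAR_not_1'[where 'a='a] by blast
qed

lemma frob:
  assumes "prime p" "CHAR('a::field) = p"
  shows "(1 + fps_X ^ 2 :: 'a fps) ^ p = fsub p (1 + fps_X ^ 2)"
proof -
  have p0: "p > 0" using assms(1) prime_gt_0_nat by blast
  define f where "f k = fps_const (of_nat (p choose k) :: 'a) * fps_X ^ (2 * k)" for k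
  have "(1 + fps_X ^ 2 :: 'a fps) ^ p = (\<Sum>k\<le>p. f k)" unfolding f_def by (rule binom_fps)
  also have "\<dots> = (\<Sum>k\<in>{0,p}. f k)"
  proof (rule sum.mono_neutral_right)
    show "\<forall>k\<in>{..p} - {0, p}. f k = 0"
    proof
      fix k assume k: "k \<in> {..p} - {0, p}"
      then have "p dvd (p choose k)" using assms(1) by (intro dvd_choose_prime) auto
      then have "of_nat (p choose k) = (0::'a)" using assms(2) by (simp add: of_nat_eq_0_iff_char_dvd)
      then show "f k = 0" by (simp add: f_def)
    qed
  qed auto
  also have "\<dots> = 1 + (fps_X ^ p) ^ 2"
    using p0 by (simp add: f_def power_mult[symmetric] mult.commute)
  also have "\<dots> = fsub p (1 + fps_X ^ 2)"
    using p0 by (simp add: fsub_def fps_compose_add_distrib fps_compose_power[symmetric])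
  finally show ?thesis .
qed

lemma G_one:
  assumes "prime p" "odd p" "CHAR('a::field) = p"
  shows "Abs_fps (cd p) ^ 2 * (1 + fps_X ^ 2) = (1 :: 'a fps)"
proof -
  have p1: "p > 1" using assms(1) prime_gt_1_nat by blast
  define D where "D = (Abs_fps (cd p) :: 'a fps)"
  define Y where "Y = (1 + fps_X ^ 2 :: 'a fps)"
  define G where "G = D ^ 2 * Y"
  have hp: "2 * phalf p + 1 = p" using assms(2) by (auto simp: phalf_def elim!: oddE)
  have "G = (Y ^ phalf p * fsub p D) ^ 2 * Y"
    unfolding G_def Y_def D_def using D_eq[OF p1 assms(2)] E_eq[of p] by metis
  also have "\<dots> = Y ^ (2 * phalf p + 1) * fsub p (D ^ 2)"
    using p1 by (simp add: fsub_power power_mult_distrib power_mult[symmetric] mult_ac)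
  also have "\<dots> = fsub p Y * fsub p (D ^ 2)"
    unfolding hp Y_def using frob[OF assms(1,3)] by simp
  also have "\<dots> = fsub p G" using p1 by (simp add: G_def fsub_mult mult.commute)
  finally have fixG: "G = fsub p G" .
  have G0: "G $ 0 = 1" by (simp add: G_def D_def Y_def power2_eq_square cd.simps)
  have Gn: "G $ n = 0" if "n > 0" for n
    using that
  proof (induction n rule: less_induct)
    case (less n)
    have "G $ n = fsub p G $ n" using fixG by simp
    also have "\<dots> = (if p dvd n then G $ (n div p) else 0)" using p1 by (simp add: fsub_nth)
    also have "\<dots> = 0"
    proof (cases "p dvd n")
      case True
      then have "n div p > 0" "n div p < n" using less.prems p1
        by (auto elim!: dvdE)
      then show ?thesis using less.IH by simp
    qed simp
    finally show ?case .
  qed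
  have "G = 1"
    by (rule fps_ext) (auto simp: G0 Gn)
  then show ?thesis by (simp add: G_def D_def Y_def)
qed

lemma poly_t_0 [simp]: "poly_t 0 = 0"
  by (simp add: poly_t_def)

lemma poly_t_pCons: "poly_t (pCons a P) = fls_const a + fls_X_inv * poly_t P"
  by (simp add: poly_t_def map_poly_pCons)

lemma poly_t_nth: "fls_nth (poly_t P) n = (if n \<le> 0 then Polynomial.coeff P (nat (-n)) else 0)"
proof (induction P arbitrary: n rule: pCons_induct)
  case 0 then show ?case by simp
next
  case (pCons a P)
  have "fls_nth (poly_t (pCons a P)) n = (if n = 0 then a else 0) + fls_nth (poly_t P) (n + 1)"
    by (simp add: poly_t_pCons fls_X_inv_times_conv_shift)
  also have "\<dots> = (if n \<le> 0 then Polynomial.coeff (pCons a P) (nat (-n)) else 0)"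
  proof (cases "n < 0")
    case True
    then have "nat (-n) = Suc (nat (- (n + 1)))" by simp
    then show ?thesis using True pCons.IH by simp
  next
    case False
    then show ?thesis using pCons.IH by auto
  qed
  finally show ?case .
qed

lemma poly_t_inj: "poly_t P = poly_t Q \<Longrightarrow> P = Q"
proof (rule poly_eqI)
  fix i assume "poly_t P = poly_t Q"
  then have "fls_nth (poly_t P) (- int i) = fls_nth (poly_t Q) (- int i)" by simp
  then show "Polynomial.coeff P i = Polynomial.coeff Q i" by (simp add: poly_t_nth)
qed

lemma poly_t_add: "poly_t (P + Q) = poly_t P + poly_t Q"
  by (rule fls_eqI) (simp add: poly_t_nth)

lemma poly_t_smult: "poly_t (Polynomial.smult a Q) = fls_const a * poly_t Q"
  by (induction Q rule: pCons_induct) (simp_all add: poly_t_pCons algebra_simps)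

lemma poly_t_mult: "poly_t (P * Q) = poly_t P * poly_t Q"
  by (induction P rule: pCons_induct)
     (simp_all add: poly_t_pCons poly_t_add poly_t_smult algebra_simps)

lemma poly_t_const: "poly_t [:c:] = fls_const c"
  by (simp add: poly_t_pCons)

lemma X_inv_X: "fls_X_inv * fls_X = (1 :: 'a::field fls)"
  by (rule fls_eqI) (simp add: fls_X_inv_times_conv_shift)

lemma bezout_poly:
  fixes P Q :: "'a::field poly"
  shows "\<exists>g u v. g = u * P + v * Q \<and> g dvd P \<and> g dvd Q"
proof (induction "euclidean_size Q" arbitrary: P Q rule: less_induct)
  case less
  show ?case
  proof (cases "Q = 0")
    case True
    then show ?thesis by (intro exI[of _ P] exI[of _ 1] exI[of _ 0]) simp
  next
    case False
    have "euclidean_size (P mod Q) < euclidean_size Q" using False by (rule mod_size_less)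
    then obtain g u v where g: "g = u * Q + v * (P mod Q)" "g dvd Q" "g dvd P mod Q"
      using less by blast
    have m: "P mod Q = P - (P div Q) * Q" by (simp add: minus_div_mult_eq_mod)
    have "g = v * P + (u - v * (P div Q)) * Q" using g(1) unfolding m by (simp add: algebra_simps)
    moreover have "g dvd P"
      using g(2,3) by (metis dvd_mod_iff)
    ultimately show ?thesis using g(2) by blast
  qed
qed

lemma no_sqrt:
  fixes P Q :: "'a::field poly"
  assumes two: "(2::'a) \<noteq> 0" and Q: "Q \<noteq> 0" and eq: "[:1,0,1:] * P ^ 2 = Q ^ 2"
  shows False
proof -
  define A where "A = ([:1,0,1:] :: 'a poly)"
  obtain g u v where g: "g = u * P + v * Q" "g dvd P" "g dvd Q" using bezout_poly by blast
  have g0: "g \<noteq> 0" using g(3) Q by auto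
  obtain P' where P': "P = g * P'" using g(2) by (elim dvdE)
  obtain Q' where Q': "Q = g * Q'" using g(3) by (elim dvdE)
  have "g * 1 = g * (u * P' + v * Q')" using g(1) P' Q' by (simp add: algebra_simps)
  then have bez: "u * P' + v * Q' = 1" using g0 by simp
  have g2: "g ^ 2 \<noteq> 0" using g0 by simp
  have eqA: "A * P ^ 2 = Q ^ 2" using eq by (simp add: A_def)
  have "g ^ 2 * (A * P' ^ 2) = A * P ^ 2" by (simp add: P' power_mult_distrib mult_ac)
  also have "\<dots> = g ^ 2 * (Q' ^ 2)" using eqA by (simp add: Q' power_mult_distrib)
  finally have eq2: "A * P' ^ 2 = Q' ^ 2" using g2 by simp
  then have d: "P' dvd Q' ^ 2" by (metis dvd_triv_right dvd_mult_right power2_eq_square)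
  have "v * Q' = 1 - u * P'" using bez by (simp add: algebra_simps)
  then have "(v * Q') ^ 2 = (1 - u * P') ^ 2" by simp
  then have "1 = (v * Q') ^ 2 + u * P' * (2 - u * P')" by (simp add: algebra_simps power2_eq_square)
  moreover have "P' dvd (v * Q') ^ 2" using d by (simp add: power_mult_distrib)
  moreover have "P' dvd u * P' * (2 - u * P')" by simp
  ultimately have "P' dvd 1" by (metis dvd_add)
  then obtain c where c1: "P' = [:c:]" "c dvd 1" using is_unit_poly_iff[of P'] by blast
  have c: "P' = [:c:]" "c \<noteq> 0" using c1 by auto
  have eq3: "Q' ^ 2 = [:c^2, 0, c^2:]" using eq2 c unfolding A_def
    by (simp add: power2_eq_square)
  have "Q' \<noteq> 0" using eq3 c by auto
  have "degree (Q' ^ 2) = 2 * degree Q'" using degree_power_eq[OF \<open>Q' \<noteq> 0\<close>, of 2] by simp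
  moreover have "degree (Q' ^ 2) = 2" using eq3 c by simp
  ultimately have "2 * degree Q' = 2" by simp
  then have d1: "degree Q' = 1" by simp
  define a where "a = Polynomial.coeff Q' 0"
  define b where "b = Polynomial.coeff Q' 1"
  have "Q' = [:a, b:]"
    by (rule poly_eqI) (auto simp: a_def b_def coeff_pCons coeff_eq_0 d1 split: nat.splits)
  then have "[:a * a, 2 * a * b, b * b:] = [:c^2, 0, c^2:]"
    using eq3 by (simp add: power2_eq_square algebra_simps)
  then have "a * a = c ^ 2" "2 * a * b = 0" "b * b = c ^ 2" by auto
  then show False using two c by auto
qed

theorem lemma5p8:
  fixes p :: nat
  assumes "prime p" and "odd p" and "CARD('a) = p"
  shows "quadratic_irrational (Theta p :: 'a::{field,finite} fls)"
proof -
  have p1: "p > 1" using assms(1) prime_gt_1_nat by blast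
  have ch: "CHAR('a) = p" using CHAR_card[OF assms(1,3)] .
  define D where "D = (Abs_fps (cd p) :: 'a fps)"
  have th: "Theta p = fls_X * fps_to_fls D"
  proof -
    have "cantor_seq p = (cd p :: nat \<Rightarrow> 'a)" by (rule ext, rule cantor_seq_cd[OF p1])
    then show ?thesis unfolding Theta_def D_def by simp
  qed
  have G: "D ^ 2 * (1 + fps_X ^ 2) = 1" unfolding D_def by (rule G_one[OF assms(1,2) ch])
  define A where "A = ([:1, 0, 1:] :: 'a poly)"
  have pA: "poly_t A = 1 + fls_X_inv * fls_X_inv" by (simp add: A_def poly_t_pCons)
  have key: "poly_t A * (Theta p :: 'a fls) ^ 2 = 1"
  proof -
    have "poly_t A * (Theta p :: 'a fls) ^ 2
        = (1 + fls_X_inv * fls_X_inv) * (fls_X * fls_X) * fps_to_fls D ^ 2"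
      by (simp add: pA th power2_eq_square mult_ac)
    also have "\<dots> = (fls_X * fls_X + (fls_X_inv * fls_X) * (fls_X_inv * fls_X)) * fps_to_fls D ^ 2"
      by (simp add: algebra_simps)
    also have "\<dots> = (fls_X * fls_X + 1) * fps_to_fls D ^ 2"
      by (simp only: X_inv_X) simp
    also have "\<dots> = fps_to_fls (D ^ 2 * (1 + fps_X ^ 2))"
      by (simp add: fls_times_fps_to_fls fps_to_fls_power power2_eq_square algebra_simps)
    also have "\<dots> = 1" using G by simp
    finally show ?thesis .
  qed
  have two: "(2::'a) \<noteq> 0"
  proof
    assume "(2::'a) = 0"
    then have "of_nat 2 = (0::'a)" by simp
    then have "CHAR('a) dvd 2" by (simp only: of_nat_eq_0_iff_char_dvd)
    then have "p dvd 2" using ch by simp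
    then have "p \<le> 2" by (simp add: dvd_imp_le)
    then have "p = 2" using p1 by simp
    then show False using assms(2) by simp
  qed
  have irr: "\<not> (\<exists>P Q. Q \<noteq> 0 \<and> (Theta p :: 'a fls) * poly_t Q = poly_t P)"
  proof
    assume "\<exists>P Q. Q \<noteq> 0 \<and> (Theta p :: 'a fls) * poly_t Q = poly_t P"
    then obtain P Q where Q: "Q \<noteq> (0 :: 'a poly)" and e: "Theta p * poly_t Q = poly_t P" by blast
    have "poly_t (A * P ^ 2) = poly_t A * (Theta p * poly_t Q) ^ 2"
      by (simp add: poly_t_mult power2_eq_square e)
    also have "\<dots> = (poly_t A * Theta p ^ 2) * poly_t Q ^ 2" by (simp add: power2_eq_square mult_ac)
    also have "\<dots> = poly_t (Q ^ 2)" using key by (simp add: poly_t_mult power2_eq_square)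
    finally have "A * P ^ 2 = Q ^ 2" by (rule poly_t_inj)
    then show False using no_sqrt[OF two Q] by (simp add: A_def)
  qed
  have quad: "poly_t A * (Theta p :: 'a fls) ^ 2 + poly_t 0 * Theta p + poly_t [:-1:] = 0"
    using key by (simp add: poly_t_const)
  show ?thesis unfolding quadratic_irrational_def
  proof (intro conjI)
    show "\<exists>A' B C. A' \<noteq> 0 \<and> poly_t A' * (Theta p :: 'a fls) ^ 2 + poly_t B * Theta p + poly_t C = 0"
      using quad by (intro exI[of _ A] exI[of _ 0] exI[of _ "[:-1:]"]) (simp add: A_def)
  qed (rule irr)
qed

end
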